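(* Let $x_1,\ldots,x_m$ be arbitrary positive integers and let $ES(x_1,\ldots,x_m)$ denote the number of sign vectors $(\varepsilon_1,\ldots,\varepsilon_m)\in\{-1,1\}^m$ with $\sum_{i=1}^m\varepsilon_i x_i=0$. Then $$ES(x_1,\ldots,x_m)\le 2^m\left(\frac{(2m-1)!!}{(2m)!!}\right)^{1/2}=\left(2\binom{2m-1}{m}\right)^{1/2}.$$ In particular, for every positive integer $m$, $J_m\le\left(2\binom{2m+1}{m+1}\right)^{1/2}$, where $J_m$ is the number of $(\delta_0,\ldots,\delta_m)\in\{-1,1\}^{m+1}$ with $\sum_{i=0}^m\delta_i\binom{m}{i}=0$.
   Context: $k!!$ denotes the double factorial, the product of all positive integers $\le k$ having the same parity as $k$. *)

theory Defs
  imports "HOL-Library.FuncSet" Complex_Main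
begin

fun dfact :: "nat \<Rightarrow> nat" where
  "dfact 0 = 1"
| "dfact (Suc 0) = 1"
| "dfact (Suc (Suc n)) = Suc (Suc n) * dfact n"

text \<open>ES x m: number of sign vectors (e_0,...,e_{m-1}) in {-1,1}^m with sum e_i x_i = 0
  (indices shifted to 0..m-1).\<close>
definition ES :: "(nat \<Rightarrow> int) \<Rightarrow> nat \<Rightarrow> nat" where
  "ES x m = card {e \<in> {..<m} \<rightarrow>\<^sub>E {-1, 1}. (\<Sum>i<m. e i * x i) = 0}"

definition J :: "nat \<Rightarrow> nat" where
  "J m = card {d \<in> {..m} \<rightarrow>\<^sub>E {-1, 1}. (\<Sum>i\<le>m. d i * int (m choose i)) = 0}"

end

theory Submission
  imports Defs "HOL-Combinatorics.Multiset_Permutations"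
begin

lemma chain_card:
  fixes A U :: "'a set" assumes fU: "finite U" and AU: "A \<subseteq> U"
  shows "card {\<sigma> \<in> permutations_of_set U. set (take (card A) \<sigma>) = A}
         = fact (card A) * fact (card U - card A)"
proof -
  have fA: "finite A" using fU AU finite_subset by blast
  let ?S = "{\<sigma> \<in> permutations_of_set U. set (take (card A) \<sigma>) = A}"
  let ?f = "\<lambda>(p, q). p @ (q :: 'a list)"
  let ?T = "permutations_of_set A \<times> permutations_of_set (U - A)"
  have eq: "?S = ?f ` ?T"
  proof
    show "?S \<subseteq> ?f ` ?T"
    proof
      fix \<sigma> assume s: "\<sigma> \<in> ?S"
      hence d: "distinct \<sigma>" and su: "set \<sigma> = U" and st: "set (take (card A) \<sigma>) = A"
        by (auto dest: permutations_of_setD)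
      have dis: "set (take (card A) \<sigma>) \<inter> set (drop (card A) \<sigma>) = {}"
        using d by (simp add: set_take_disj_set_drop_if_distinct)
      have "set (take (card A) \<sigma>) \<union> set (drop (card A) \<sigma>) = U"
        using su by (metis append_take_drop_id set_append)
      hence sd: "set (drop (card A) \<sigma>) = U - A" using dis st by blast
      have "(take (card A) \<sigma>, drop (card A) \<sigma>) \<in> ?T"
        using st sd d by (auto intro!: permutations_of_setI)
      moreover have "\<sigma> = ?f (take (card A) \<sigma>, drop (card A) \<sigma>)" by simp
      ultimately show "\<sigma> \<in> ?f ` ?T" by blast
    qed
  next
    show "?f ` ?T \<subseteq> ?S"
    proof
      fix \<sigma> assume "\<sigma> \<in> ?f ` ?T"
      then obtain p q where pq: "p \<in> permutations_of_set A" "q \<in> permutations_of_set (U - A)"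
        and s: "\<sigma> = p @ q" by auto
      have lp: "length p = card A" using pq(1) by (rule length_finite_permutations_of_set)
      have "set p = A" "distinct p" "set q = U - A" "distinct q"
        using pq by (auto dest: permutations_of_setD)
      hence "\<sigma> \<in> permutations_of_set U" using s AU by (auto intro!: permutations_of_setI)
      moreover have "take (card A) \<sigma> = p" using s lp by simp
      ultimately show "\<sigma> \<in> ?S" using \<open>set p = A\<close> by simp
    qed
  qed
  have inj: "inj_on ?f ?T"
  proof (rule inj_onI)
    fix a b assume a: "a \<in> ?T" and b: "b \<in> ?T" and e: "?f a = ?f b"
    obtain p q where [simp]: "a = (p, q)" by (cases a)
    obtain p' q' where [simp]: "b = (p', q')" by (cases b)
    have "length p = card A" "length p' = card A"
      using a b by (auto intro: length_finite_permutations_of_set)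
    thus "a = b" using e by auto
  qed
  have "card ?S = card ?T" using eq inj by (simp add: card_image)
  also have "\<dots> = fact (card A) * fact (card U - card A)"
    using fA fU AU by (simp add: card_cartesian_product card_Diff_subset)
  finally show ?thesis .
qed

lemma sperner:
  fixes F :: "nat set set"
  assumes FP: "F \<subseteq> Pow {..<n}" and anti: "\<forall>A\<in>F. \<forall>B\<in>F. A \<subseteq> B \<longrightarrow> A = B"
  shows "card F \<le> n choose (n div 2)"
proof -
  let ?P = "permutations_of_set {..<n::nat}"
  define C where "C A = {\<sigma> \<in> ?P. set (take (card A) \<sigma>) = A}" for A :: "nat set"
  have fF: "finite F" using FP by (meson finite_Pow_iff finite_lessThan finite_subset)
  have cardC: "card (C A) = fact (card A) * fact (n - card A)" if "A \<in> F" for A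
    using chain_card[of "{..<n}" A] that FP unfolding C_def by auto
  have disj: "C A \<inter> C B = {}" if "A \<in> F" "B \<in> F" "A \<noteq> B" for A B
  proof (rule ccontr)
    assume "C A \<inter> C B \<noteq> {}"
    then obtain \<sigma> where "\<sigma> \<in> C A" "\<sigma> \<in> C B" by blast
    hence sa: "set (take (card A) \<sigma>) = A" and sb: "set (take (card B) \<sigma>) = B"
      unfolding C_def by auto
    have "A \<subseteq> B \<or> B \<subseteq> A"
    proof (cases "card A \<le> card B")
      case True
      have "set (take (card A) \<sigma>) \<subseteq> set (take (card B) \<sigma>)"
        by (rule set_take_subset_set_take[OF True])
      thus ?thesis using sa sb by simp
    next
      case False
      hence "card B \<le> card A" by simp
      hence "set (take (card B) \<sigma>) \<subseteq> set (take (card A) \<sigma>)"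
        by (rule set_take_subset_set_take)
      thus ?thesis using sa sb by simp
    qed
    thus False using anti that by blast
  qed
  have "(\<Sum>A\<in>F. card (C A)) = card (\<Union>A\<in>F. C A)"
    using fF disj by (subst card_UN_disjoint) (auto simp: C_def)
  also have "\<dots> \<le> card ?P"
    by (rule card_mono) (auto simp: C_def)
  also have "\<dots> = fact n" by simp
  finally have s1: "(\<Sum>A\<in>F. card (C A)) \<le> fact n" .
  let ?M = "n choose (n div 2)"
  have lb: "fact n \<le> card (C A) * ?M" if "A \<in> F" for A
  proof -
    have kn: "card A \<le> n" using that FP card_mono[of "{..<n}" A] by auto
    have "fact n = card (C A) * (n choose card A)"
      using binomial_fact_lemma[OF kn] cardC[OF that] by simp
    also have "\<dots> \<le> card (C A) * ?M" by (simp add: binomial_maximum)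
    finally show ?thesis .
  qed
  have "card F * fact n = (\<Sum>A\<in>F. fact n)" by simp
  also have "\<dots> \<le> (\<Sum>A\<in>F. card (C A) * ?M)" by (rule sum_mono) (use lb in auto)
  also have "\<dots> = (\<Sum>A\<in>F. card (C A)) * ?M" by (simp add: sum_distrib_right)
  also have "\<dots> \<le> fact n * ?M" using s1 by simp
  finally have "card F * fact n \<le> ?M * fact n" by (simp add: mult.commute)
  thus ?thesis by simp
qed

lemma ES_bound:
  fixes x :: "nat \<Rightarrow> int"
  assumes pos: "\<forall>i<n. x i > 0"
  shows "ES x n \<le> n choose (n div 2)"
proof -
  let ?E = "{e \<in> {..<n} \<rightarrow>\<^sub>E {-1, 1}. (\<Sum>i<n. e i * x i) = 0}"
  define g where "g e = {i. i < n \<and> e i = (1::int)}" for e :: "nat \<Rightarrow> int"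
  have gsub: "g e \<subseteq> {..<n}" for e unfolding g_def by auto
  have key: "(\<Sum>i<n. e i * x i) = 2 * sum x (g e) - sum x {..<n}"
    if e: "e \<in> {..<n} \<rightarrow>\<^sub>E {-1, 1}" for e
  proof -
    have "(\<Sum>i<n. e i * x i) = (\<Sum>i<n. 2 * (if i \<in> g e then x i else 0) - x i)"
    proof (rule sum.cong)
      fix i assume "i \<in> {..<n}"
      hence "e i = 1 \<or> e i = -1" using e by (auto simp: PiE_iff)
      thus "e i * x i = 2 * (if i \<in> g e then x i else 0) - x i"
        using \<open>i \<in> {..<n}\<close> by (auto simp: g_def)
    qed simp
    also have "\<dots> = 2 * (\<Sum>i<n. (if i \<in> g e then x i else 0)) - sum x {..<n}"
      by (simp add: sum_subtractf sum_distrib_left)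
    also have "(\<Sum>i<n. (if i \<in> g e then x i else 0)) = sum x ({..<n} \<inter> g e)"
      by (simp add: sum.inter_restrict)
    also have "{..<n} \<inter> g e = g e" using gsub by blast
    finally show ?thesis .
  qed
  have inj: "inj_on g ?E"
  proof (rule inj_onI)
    fix e e' assume e: "e \<in> ?E" and e': "e' \<in> ?E" and ge: "g e = g e'"
    show "e = e'"
    proof (rule PiE_ext)
      show "e \<in> {..<n} \<rightarrow>\<^sub>E {-1, 1}" "e' \<in> {..<n} \<rightarrow>\<^sub>E {-1, 1}" using e e' by auto
      fix i assume i: "i \<in> {..<n}"
      have "e i = 1 \<or> e i = -1" "e' i = 1 \<or> e' i = -1" using e e' i by (auto simp: PiE_iff)
      moreover have "(e i = 1) = (e' i = 1)" using ge i unfolding g_def by blast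
      ultimately show "e i = e' i" by auto
    qed
  qed
  have anti: "\<forall>A\<in>g ` ?E. \<forall>B\<in>g ` ?E. A \<subseteq> B \<longrightarrow> A = B"
  proof (intro ballI impI)
    fix A B assume "A \<in> g ` ?E" "B \<in> g ` ?E" and AB: "A \<subseteq> B"
    then obtain e e' where e: "e \<in> ?E" "A = g e" and e': "e' \<in> ?E" "B = g e'" by blast
    have "2 * sum x A - sum x {..<n} = 0" using key[of e] e by simp
    moreover have "2 * sum x B - sum x {..<n} = 0" using key[of e'] e' by simp
    ultimately have "sum x A = sum x B" by linarith
    moreover have "sum x B = sum x A + sum x (B - A)"
    proof -
      have "finite B" using gsub[of e'] e'(2) by (metis finite_lessThan finite_subset)
      hence "sum x B = sum x (B - A) + sum x A" by (rule sum.subset_diff[OF AB])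
      thus ?thesis by linarith
    qed
    ultimately have z: "sum x (B - A) = 0" by simp
    show "A = B"
    proof (rule ccontr)
      assume "A \<noteq> B"
      hence ne: "B - A \<noteq> {}" using AB by blast
      have fin: "finite (B - A)" using gsub[of e'] e'(2) by (metis finite_lessThan finite_subset finite_Diff)
      have "\<forall>i\<in>B - A. x i > 0"
      proof
        fix i assume "i \<in> B - A"
        hence "i < n" using gsub[of e'] e'(2) by auto
        thus "x i > 0" using pos by simp
      qed
      hence "sum x (B - A) > 0" using sum_pos[OF fin ne] by blast
      thus False using z by linarith
    qed
  qed
  have "ES x n = card ?E" unfolding ES_def by simp
  also have "\<dots> = card (g ` ?E)" using inj by (simp add: card_image)
  also have "\<dots> \<le> n choose (n div 2)"
    by (rule sperner) (use gsub anti in auto)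
  finally show ?thesis .
qed

lemma dfact_prod: "dfact n * dfact (Suc n) = fact (Suc n)"
proof (induction n)
  case 0 thus ?case by simp
next
  case (Suc n)
  have "dfact (Suc n) * dfact (Suc (Suc n)) = Suc (Suc n) * (dfact n * dfact (Suc n))"
    by (simp add: algebra_simps)
  also have "\<dots> = Suc (Suc n) * fact (Suc n)" using Suc.IH by simp
  also have "\<dots> = fact (Suc (Suc n))" by (metis fact_Suc of_nat_id)
  finally show ?case .
qed

lemma dfact_even: "dfact (2 * m) = 2 ^ m * fact m"
proof (induction m)
  case 0 thus ?case by simp
next
  case (Suc m)
  have "dfact (2 * Suc m) = dfact (Suc (Suc (2 * m)))" by simp
  also have "\<dots> = 2 * Suc m * dfact (2 * m)" by simp
  finally show ?case using Suc.IH by (simp add: fact_Suc algebra_simps)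
qed

lemma choose_mid: "m \<ge> 1 \<Longrightarrow> 2 * ((2 * m - 1) choose m) = (2 * m) choose m"
proof -
  assume m: "m \<ge> 1"
  obtain k where k: "m = Suc k" using m by (cases m) auto
  have "((2 * m) choose m) = (Suc (2*k+1) choose (Suc k))" using k by simp
  also have "\<dots> = ((2*k+1) choose k) + ((2*k+1) choose (Suc k))" by simp
  also have "((2*k+1) choose k) = ((2*k+1) choose (Suc k))"
    using binomial_symmetric[of k "2*k+1"] by simp
  finally show ?thesis using k by simp
qed

lemma ES_sqrt:
  fixes x :: "nat \<Rightarrow> int"
  assumes "\<forall>i<n. x i > 0"
  shows "real (ES x n) \<le> sqrt (real ((2 * n) choose n))"
proof (rule real_le_rsqrt)
  have "ES x n \<le> n choose (n div 2)" by (rule ES_bound[OF assms])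
  hence "(ES x n)^2 \<le> (n choose (n div 2))^2" by (simp add: power_mono)
  also have "\<dots> \<le> (\<Sum>k\<le>n. (n choose k)^2)"
    by (rule member_le_sum) auto
  also have "\<dots> = (2 * n) choose n" by (rule choose_square_sum)
  finally have "(ES x n)^2 \<le> (2 * n) choose n" .
  hence "real ((ES x n)^2) \<le> real ((2 * n) choose n)" by linarith
  thus "(real (ES x n))^2 \<le> real ((2 * n) choose n)" by simp
qed

lemma identity:
  assumes m: "m \<ge> 1"
  shows "2 ^ m * sqrt (real (dfact (2 * m - 1)) / real (dfact (2 * m)))
         = sqrt (real ((2 * m) choose m))"
proof -
  have p: "dfact (2*m - 1) * dfact (2*m) = fact (2*m)"
    using dfact_prod[of "2*m - 1"] m by simp
  have f: "fact (2*m) = ((2*m) choose m) * fact m * (fact m :: nat)"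
    using binomial_fact_lemma[of m "2*m"] by (simp add: mult.commute mult.left_commute)
  have e: "dfact (2*m) = 2^m * fact m" by (rule dfact_even)
  define a where "a = real (dfact (2*m - 1))"
  define b where "b = real (dfact (2*m))"
  define c where "c = real ((2*m) choose m)"
  define g where "g = real (fact m :: nat)"
  have ab: "a * b = c * g * g" unfolding a_def b_def c_def g_def
    by (metis p f of_nat_mult)
  have bg: "b = 2^m * g" unfolding b_def g_def e by simp
  have g0: "g \<noteq> 0" unfolding g_def by simp
  have "real (dfact (2 * m - 1)) / real (dfact (2 * m)) = a / b" unfolding a_def b_def ..
  also have "\<dots> = (a * b) / (b * b)" using bg g0 by simp
  also have "\<dots> = (c*g*g) / ((2^m*g)*(2^m*g))" by (simp only: ab, simp only: bg)
  also have "\<dots> = c / (2^m)^2" using g0 by (simp add: field_simps power2_eq_square)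
  also have "\<dots> = real ((2*m) choose m) / (2^m)^2" unfolding c_def ..
  finally have r: "real (dfact (2 * m - 1)) / real (dfact (2 * m)) = real ((2*m) choose m) / (2^m)^2" .
  have "sqrt (real ((2*m) choose m) / (2^m)^2) = sqrt (real ((2*m) choose m)) / 2^m"
    by (simp add: real_sqrt_divide)
  thus ?thesis using r by simp
qed

theorem theorem3:
  fixes x :: "nat \<Rightarrow> int" and m :: nat
  assumes "m \<ge> 1" and "\<forall>i<m. x i > 0"
  shows "real (ES x m) \<le> 2 ^ m * sqrt (real (dfact (2 * m - 1)) / real (dfact (2 * m)))
       \<and> 2 ^ m * sqrt (real (dfact (2 * m - 1)) / real (dfact (2 * m)))
           = sqrt (2 * real ((2 * m - 1) choose m))
       \<and> real (J m) \<le> sqrt (2 * real ((2 * m + 1) choose (m + 1)))"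
proof (intro conjI)
  have id: "2 ^ m * sqrt (real (dfact (2 * m - 1)) / real (dfact (2 * m)))
         = sqrt (real ((2 * m) choose m))" by (rule identity[OF assms(1)])
  show "real (ES x m) \<le> 2 ^ m * sqrt (real (dfact (2 * m - 1)) / real (dfact (2 * m)))"
    using ES_sqrt[OF assms(2)] id by simp
  have "real ((2 * m) choose m) = 2 * real ((2 * m - 1) choose m)"
  proof -
    have h: "(2 * m) choose m = 2 * ((2 * m - 1) choose m)" using choose_mid[OF assms(1)] by simp
    show ?thesis by (simp add: h)
  qed
  thus "2 ^ m * sqrt (real (dfact (2 * m - 1)) / real (dfact (2 * m)))
           = sqrt (2 * real ((2 * m - 1) choose m))" using id by simp
  have J: "J m = ES (\<lambda>i. int (m choose i)) (Suc m)"
    unfolding J_def ES_def lessThan_Suc_atMost ..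
  have "real (J m) \<le> sqrt (real ((2 * Suc m) choose Suc m))"
    unfolding J by (rule ES_sqrt) simp
  also have "real ((2 * Suc m) choose Suc m) = 2 * real ((2 * m + 1) choose (m + 1))"
  proof -
    have h: "(2 * Suc m) choose Suc m = 2 * ((2 * m + 1) choose (m + 1))"
      using choose_mid[of "Suc m"] by simp
    show ?thesis unfolding h of_nat_mult by simp
  qed
  finally show "real (J m) \<le> sqrt (2 * real ((2 * m + 1) choose (m + 1)))" .
qed

end
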